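(* Let $G$ be a probability distribution on $\mathbb{R}$ (with finite second moment), let $\mu\sim G$ and $Z\sim N(0,1)$ be independent, and let $r(\tau, G) = \mathbb{E}_{\mu, Z} [(\eta(\mu+Z ; \tau) -\mu)^2]$ for $\tau\ge0$, where $\eta(a;\tau)=(|a|-\tau)_+\mathrm{sign}(a)$. If $\mathbb{P}(\mu\neq0)\neq0$, then there exists $\tau_0$ such that $\frac{\partial r(\tau, G)}{\partial \tau}\big|_{\tau=\hat{\tau}}>0$ for all $\hat\tau>\tau_0$. *)

theory Defs
  imports "HOL-Probability.Probability"
begin

definition soft_thresh :: "real \<Rightarrow> real \<Rightarrow> real" where
  "soft_thresh a \<tau> = max (\<bar>a\<bar> - \<tau>) 0 * sgn a"

definition std_normal :: "real measure" where
  "std_normal = density lborel std_normal_density"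

definition risk :: "real \<Rightarrow> real measure \<Rightarrow> real" where
  "risk \<tau> G = (\<integral>p. (soft_thresh (fst p + snd p) \<tau> - fst p)\<^sup>2 \<partial>(G \<Otimes>\<^sub>M std_normal))"

end

theory Submission
  imports Defs "HOL-Real_Asymp.Real_Asymp"
begin

definition Lam :: "(real \<Rightarrow> real) \<Rightarrow> real \<Rightarrow> real" where
  "Lam f u = (\<integral>x. indicator {..u} x * f x \<partial>lborel)"

lemma Lam_deriv:
  assumes cont: "continuous_on UNIV f" and int: "integrable lborel f"
  shows "(Lam f has_real_derivative f x) (at x)"
proof -
  define c where "c = x - 1"
  define K where "K = (\<integral>y. indicator {..<c} y * f y \<partial>lborel)"
  have eq: "Lam f u = K + integral {c..u} f" if "c \<le> u" for u
  proof -
    have si: "set_integrable lborel {c..u} f"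
      by (rule borel_integrable_atLeastAtMost') (use cont in \<open>auto intro: continuous_on_subset\<close>)
    have i1: "integrable lborel (\<lambda>y. indicator {..<c} y * f y)"
      using integrable_mult_indicator[OF _ int, of "{..<c}"] by simp
    have i2: "integrable lborel (\<lambda>y. indicator {c..u} y * f y)"
      using si by (simp add: set_integrable_def)
    have "(\<lambda>y. indicator {..u} y * f y) = (\<lambda>y. indicator {..<c} y * f y + indicator {c..u} y * f y)"
      using that by (auto simp: fun_eq_iff split: split_indicator)
    then have "Lam f u = K + (\<integral>y. indicator {c..u} y * f y \<partial>lborel)"
      unfolding Lam_def K_def using i1 i2 by (simp add: integral_add)
    also have "(\<integral>y. indicator {c..u} y * f y \<partial>lborel) = integral {c..u} f"
      using set_borel_integral_eq_integral(2)[OF si] by (simp add: set_lebesgue_integral_def)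
    finally show ?thesis .
  qed
  have "((\<lambda>u. integral {c..u} f) has_vector_derivative f x) (at x within {c..x+1})"
    by (rule integral_has_vector_derivative) (use cont c_def in \<open>auto intro: continuous_on_subset\<close>)
  then have "((\<lambda>u. integral {c..u} f) has_vector_derivative f x) (at x)"
    using at_within_Icc_at[of c x "x+1"] c_def by simp
  then have "((\<lambda>u. integral {c..u} f) has_real_derivative f x) (at x)"
    by (simp add: has_real_derivative_iff_has_vector_derivative)
  then have "((\<lambda>u. K + integral {c..u} f) has_real_derivative f x) (at x)"
    using DERIV_add[OF DERIV_const] by fastforce
  then show ?thesis
    by (rule has_field_derivative_transform_within_open[where S="{c<..}"]) (use eq c_def in auto)
qed

lemma Lam_lim:
  assumes "integrable lborel f"
  shows "(Lam f \<longlongrightarrow> (\<integral>x. f x \<partial>lborel)) at_top"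
  using tendsto_integral_at_top[of lborel f] assms unfolding Lam_def by simp

lemma phi_deriv: "(std_normal_density has_real_derivative (- x * std_normal_density x)) (at x)"
  unfolding std_normal_density_def
  by (auto intro!: derivative_eq_intros simp: field_simps)

lemma phi_lim: "(std_normal_density \<longlongrightarrow> 0) at_top"
  unfolding std_normal_density_def by real_asymp

lemma xphi_lim: "((\<lambda>x. x * std_normal_density x) \<longlongrightarrow> 0) at_top"
  unfolding std_normal_density_def by real_asymp

lemma phi_cont: "continuous_on UNIV std_normal_density"
  unfolding std_normal_density_def by (intro continuous_intros) auto

lemma const_from_lim:
  fixes F :: "real \<Rightarrow> real"
  assumes "\<And>x. (F has_real_derivative 0) (at x)" "(F \<longlongrightarrow> L) at_top"
  shows "F u = L"
proof -
  have "\<And>y. F y = F u" using DERIV_isconst_all assms(1) by blast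
  define C where "C = F u"
  have "F = (\<lambda>_. C)" using \<open>\<And>y. F y = F u\<close> C_def by auto
  with assms(2) have "((\<lambda>_::real. C) \<longlongrightarrow> L) at_top" by simp
  then show ?thesis by (metis C_def tendsto_const_iff trivial_limit_at_top_linorder)
qed

definition Phi :: "real \<Rightarrow> real" where "Phi = Lam std_normal_density"

lemma Phi_deriv: "(Phi has_real_derivative std_normal_density x) (at x)"
  unfolding Phi_def by (rule Lam_deriv[OF phi_cont]) simp

lemma Phi_lim: "(Phi \<longlongrightarrow> 1) at_top"
  unfolding Phi_def using Lam_lim[of std_normal_density] by simp

lemma Lam1: "Lam (\<lambda>x. std_normal_density x * x) u = - std_normal_density u"
proof -
  have int: "integrable lborel (\<lambda>x. std_normal_density x * x)"
    using integrable_std_normal_moment[of 1] by simp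
  have c: "continuous_on UNIV (\<lambda>x. std_normal_density x * x)"
    by (intro continuous_intros phi_cont)
  have "Lam (\<lambda>x. std_normal_density x * x) u + std_normal_density u = 0"
  proof (rule const_from_lim[where F="\<lambda>u. Lam (\<lambda>x. std_normal_density x * x) u + std_normal_density u"])
    fix x show "((\<lambda>u. Lam (\<lambda>x. std_normal_density x * x) u + std_normal_density u) has_real_derivative 0) (at x)"
      using DERIV_add[OF Lam_deriv[OF c int, of x] phi_deriv[of x]] by simp
    have "(\<integral>x. std_normal_density x * x \<partial>lborel) = 0"
      using integral_std_normal_moment_odd[of 0] by simp
    then show "((\<lambda>u. Lam (\<lambda>x. std_normal_density x * x) u + std_normal_density u) \<longlongrightarrow> 0) at_top"
      using tendsto_add[OF Lam_lim[OF int] phi_lim] by simp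
  qed
  then show ?thesis by simp
qed

lemma Lam2: "Lam (\<lambda>x. std_normal_density x * x\<^sup>2) u = Phi u - u * std_normal_density u"
proof -
  have int: "integrable lborel (\<lambda>x. std_normal_density x * x\<^sup>2)"
    using integrable_std_normal_moment[of 2] by simp
  have c: "continuous_on UNIV (\<lambda>x. std_normal_density x * x\<^sup>2)"
    by (intro continuous_intros phi_cont)
  have "Lam (\<lambda>x. std_normal_density x * x\<^sup>2) u - (Phi u - u * std_normal_density u) = 0"
  proof (rule const_from_lim[where F="\<lambda>u. Lam (\<lambda>x. std_normal_density x * x\<^sup>2) u - (Phi u - u * std_normal_density u)"])
    fix x show "((\<lambda>u. Lam (\<lambda>x. std_normal_density x * x\<^sup>2) u - (Phi u - u * std_normal_density u)) has_real_derivative 0) (at x)"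
    proof -
      have "((\<lambda>u. Lam (\<lambda>x. std_normal_density x * x\<^sup>2) u - (Phi u - u * std_normal_density u)) has_real_derivative
         (std_normal_density x * x\<^sup>2 - (std_normal_density x - (1 * std_normal_density x + (- x * std_normal_density x) * x)))) (at x)"
        by (intro DERIV_diff DERIV_mult[OF DERIV_ident phi_deriv] Lam_deriv[OF c int] Phi_deriv)
      then show ?thesis by (simp add: algebra_simps power2_eq_square)
    qed
    have "(\<integral>x. std_normal_density x * x\<^sup>2 \<partial>lborel) = 1"
      using integral_std_normal_moment_even[of 1] by (simp add: numeral_eq_Suc)
    then show "((\<lambda>u. Lam (\<lambda>x. std_normal_density x * x\<^sup>2) u - (Phi u - u * std_normal_density u)) \<longlongrightarrow> 0) at_top"
      using tendsto_diff[OF Lam_lim[OF int] tendsto_diff[OF Phi_lim xphi_lim]] by simp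
  qed
  then show ?thesis by simp
qed


definition q :: "real \<Rightarrow> real \<Rightarrow> real \<Rightarrow> real \<Rightarrow> real" where
  "q c0 c1 c2 z = c0 * std_normal_density z + c1 * (std_normal_density z * z) + c2 * (std_normal_density z * z\<^sup>2)"

lemma int0: "integrable lborel std_normal_density" by simp
lemma int1: "integrable lborel (\<lambda>z. std_normal_density z * z)"
  using integrable_std_normal_moment[of 1] by simp
lemma int2: "integrable lborel (\<lambda>z. std_normal_density z * z\<^sup>2)"
  using integrable_std_normal_moment[of 2] by simp

lemma q_int: "integrable lborel (q c0 c1 c2)"
  unfolding q_def[abs_def]
  using Bochner_Integration.integrable_add[OF Bochner_Integration.integrable_add[OF integrable_mult_right[OF int0] integrable_mult_right[OF int1]] integrable_mult_right[OF int2]] by simp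

lemma q_int_ind: assumes "S \<in> sets borel" shows "integrable lborel (\<lambda>z. q c0 c1 c2 z * indicator S z)"
proof -
  have "integrable lborel (\<lambda>z. indicator S z *\<^sub>R q c0 c1 c2 z)"
    by (rule integrable_mult_indicator) (use assms in \<open>auto intro: q_int\<close>)
  then show ?thesis by (simp add: mult.commute)
qed

lemma q_total: "(\<integral>z. q c0 c1 c2 z \<partial>lborel) = c0 + c2"
proof -
  have a: "(\<integral>x. std_normal_density x * x \<partial>lborel) = 0"
    using integral_std_normal_moment_odd[of 0] by simp
  have b: "(\<integral>x. std_normal_density x * x\<^sup>2 \<partial>lborel) = 1"
    using integral_std_normal_moment_even[of 1] by (simp add: numeral_eq_Suc)
  have i0: "integrable lborel (\<lambda>z. c0 * std_normal_density z)" by (rule integrable_mult_right[OF int0])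
  have i1: "integrable lborel (\<lambda>z. c1 * (std_normal_density z * z))" by (rule integrable_mult_right[OF int1])
  have i2: "integrable lborel (\<lambda>z. c2 * (std_normal_density z * z\<^sup>2))" by (rule integrable_mult_right[OF int2])
  have "(\<integral>z. q c0 c1 c2 z \<partial>lborel) = (\<integral>z. c0 * std_normal_density z + c1 * (std_normal_density z * z) \<partial>lborel) + (\<integral>z. c2 * (std_normal_density z * z\<^sup>2) \<partial>lborel)"
    unfolding q_def by (rule Bochner_Integration.integral_add[OF Bochner_Integration.integrable_add[OF i0 i1] i2])
  also have "\<dots> = c0 * (\<integral>z. std_normal_density z \<partial>lborel) + c1 * (\<integral>z. std_normal_density z * z \<partial>lborel) + c2 * (\<integral>z. std_normal_density z * z\<^sup>2 \<partial>lborel)"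
    by (simp only: Bochner_Integration.integral_add[OF i0 i1] integral_mult_right_zero)
  finally show ?thesis using a b by simp
qed

lemma q_meas[measurable]: "q c0 c1 c2 \<in> borel_measurable borel"
  unfolding q_def[abs_def] by measurable

lemma Lam_q: "Lam (q c0 c1 c2) u = c0 * Phi u - c1 * std_normal_density u + c2 * (Phi u - u * std_normal_density u)"
proof -
  have i: "\<And>f. integrable lborel f \<Longrightarrow> integrable lborel (\<lambda>x. c * (indicator {..u} x * f x))" for c :: real
  proof -
    fix f :: "real \<Rightarrow> real" assume "integrable lborel f"
    then have "integrable lborel (\<lambda>x. indicator {..u} x *\<^sub>R f x)"
      by (intro integrable_mult_indicator) auto
    then show "integrable lborel (\<lambda>x. c * (indicator {..u} x * f x))"
      by (intro integrable_mult_right) simp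
  qed
  have eq: "(\<lambda>x. indicator {..u} x * q c0 c1 c2 x) = (\<lambda>x. c0 * (indicator {..u} x * std_normal_density x) +
     c1 * (indicator {..u} x * (std_normal_density x * x)) + c2 * (indicator {..u} x * (std_normal_density x * x\<^sup>2)))"
    unfolding q_def by (auto simp: fun_eq_iff algebra_simps)
  have "Lam (q c0 c1 c2) u = (\<integral>x. c0 * (indicator {..u} x * std_normal_density x) +
     c1 * (indicator {..u} x * (std_normal_density x * x)) \<partial>lborel) + (\<integral>x. c2 * (indicator {..u} x * (std_normal_density x * x\<^sup>2)) \<partial>lborel)"
    unfolding Lam_def eq
    by (rule Bochner_Integration.integral_add[OF Bochner_Integration.integrable_add[OF i[OF int0] i[OF int1]] i[OF int2]])
  also have "\<dots> = c0 * Lam std_normal_density u + c1 * Lam (\<lambda>z. std_normal_density z * z) u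
       + c2 * Lam (\<lambda>z. std_normal_density z * z\<^sup>2) u"
    unfolding Lam_def
    by (simp only: Bochner_Integration.integral_add[OF i[OF int0] i[OF int1]] integral_mult_right_zero)
  finally show ?thesis using Lam1 Lam2 by (simp add: Phi_def)
qed

lemma q_right: "(\<integral>z. q c0 c1 c2 z * indicator {a<..} z \<partial>lborel) = c0 + c2 - (c0 * Phi a - c1 * std_normal_density a + c2 * (Phi a - a * std_normal_density a))"
proof -
  have "(\<lambda>z. q c0 c1 c2 z * indicator {a<..} z) = (\<lambda>z. q c0 c1 c2 z - indicator {..a} z * q c0 c1 c2 z)"
    by (auto simp: fun_eq_iff split: split_indicator)
  moreover have ii: "integrable lborel (\<lambda>z. indicator {..a} z * q c0 c1 c2 z)"
    using q_int_ind[of "{..a}"] by (simp add: mult.commute)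
  ultimately have "(\<integral>z. q c0 c1 c2 z * indicator {a<..} z \<partial>lborel) = (\<integral>z. q c0 c1 c2 z \<partial>lborel) - Lam (q c0 c1 c2) a"
    unfolding Lam_def using Bochner_Integration.integral_diff[OF q_int ii] by simp
  then show ?thesis using q_total Lam_q by simp
qed

lemma q_left: "(\<integral>z. q c0 c1 c2 z * indicator {..<b} z \<partial>lborel) = c0 * Phi b - c1 * std_normal_density b + c2 * (Phi b - b * std_normal_density b)"
proof -
  have "(\<integral>z. q c0 c1 c2 z * indicator {..<b} z \<partial>lborel) = (\<integral>z. indicator {..b} z * q c0 c1 c2 z \<partial>lborel)"
  proof (rule integral_cong_AE)
    show "AE x in lborel. q c0 c1 c2 x * indicator {..<b} x = indicator {..b} x * q c0 c1 c2 x"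
      using AE_lborel_singleton[of b] by eventually_elim (auto split: split_indicator)
  qed measurable
  then show ?thesis using Lam_q unfolding Lam_def by simp
qed


definition rho :: "real \<Rightarrow> real \<Rightarrow> real" where
  "rho m \<tau> = (\<integral>z. (soft_thresh (m + z) \<tau> - m)\<^sup>2 \<partial>std_normal)"

definition rhocf :: "real \<Rightarrow> real \<Rightarrow> real" where
  "rhocf m \<tau> = m\<^sup>2 + ((\<tau>\<^sup>2 - m\<^sup>2) + 1 - ((\<tau>\<^sup>2 - m\<^sup>2) * Phi (\<tau> - m) + 2 * \<tau> * std_normal_density (\<tau> - m)
      + (Phi (\<tau> - m) - (\<tau> - m) * std_normal_density (\<tau> - m))))
    + ((\<tau>\<^sup>2 - m\<^sup>2) * Phi (- \<tau> - m) - 2 * \<tau> * std_normal_density (- \<tau> - m)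
      + (Phi (- \<tau> - m) - (- \<tau> - m) * std_normal_density (- \<tau> - m)))"

lemma soft_meas[measurable]: "(\<lambda>p. soft_thresh p \<tau>) \<in> borel_measurable borel"
  unfolding soft_thresh_def by measurable

lemma pointwise:
  assumes "\<tau> \<ge> 0"
  shows "std_normal_density z * (soft_thresh (m + z) \<tau> - m)\<^sup>2 =
    std_normal_density z * m\<^sup>2 + q (\<tau>\<^sup>2 - m\<^sup>2) (- 2 * \<tau>) 1 z * indicator {\<tau> - m<..} z
    + q (\<tau>\<^sup>2 - m\<^sup>2) (2 * \<tau>) 1 z * indicator {..< - \<tau> - m} z"
proof (cases "m + z > \<tau>")
  case True
  then have e: "(soft_thresh (m + z) \<tau> - m)\<^sup>2 = (z - \<tau>)\<^sup>2" using assms by (simp add: soft_thresh_def add.commute)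
  moreover have "z \<in> {\<tau> - m<..}" "z \<notin> {..< - \<tau> - m}" using True assms by auto
  ultimately show ?thesis unfolding e by (simp add: q_def power2_eq_square algebra_simps)
next
  case False
  show ?thesis
  proof (cases "m + z < - \<tau>")
    case True
    then have e: "(soft_thresh (m + z) \<tau> - m)\<^sup>2 = (z + \<tau>)\<^sup>2" using assms by (simp add: soft_thresh_def add.commute)
    moreover have "z \<notin> {\<tau> - m<..}" "z \<in> {..< - \<tau> - m}" using True assms by auto
    ultimately show ?thesis unfolding e by (simp add: q_def power2_eq_square algebra_simps)
  next
    case F2: False
    then have e: "(soft_thresh (m + z) \<tau> - m)\<^sup>2 = m\<^sup>2" using False by (simp add: soft_thresh_def)
    moreover have "z \<notin> {\<tau> - m<..}" "z \<notin> {..< - \<tau> - m}" using False F2 by auto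
    ultimately show ?thesis unfolding e by (simp add: q_def power2_eq_square algebra_simps)
  qed
qed

lemma rho_eq:
  assumes "\<tau> \<ge> 0"
  shows "rho m \<tau> = rhocf m \<tau>"
proof -
  have "rho m \<tau> = (\<integral>z. std_normal_density z * (soft_thresh (m + z) \<tau> - m)\<^sup>2 \<partial>lborel)"
    unfolding rho_def std_normal_def by (subst integral_density) auto
  also have "\<dots> = (\<integral>z. std_normal_density z * m\<^sup>2 + q (\<tau>\<^sup>2 - m\<^sup>2) (- 2 * \<tau>) 1 z * indicator {\<tau> - m<..} z
    + q (\<tau>\<^sup>2 - m\<^sup>2) (2 * \<tau>) 1 z * indicator {..< - \<tau> - m} z \<partial>lborel)"
    using pointwise[OF assms] by simp
  also have "\<dots> = (\<integral>z. std_normal_density z * m\<^sup>2 \<partial>lborel) + (\<integral>z. q (\<tau>\<^sup>2 - m\<^sup>2) (- 2 * \<tau>) 1 z * indicator {\<tau> - m<..} z \<partial>lborel)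
    + (\<integral>z. q (\<tau>\<^sup>2 - m\<^sup>2) (2 * \<tau>) 1 z * indicator {..< - \<tau> - m} z \<partial>lborel)"
    using integrable_mult_left[OF int0, of "m\<^sup>2"] q_int_ind[of "{\<tau> - m<..}"] q_int_ind[of "{..< - \<tau> - m}"]
    by (simp add: Bochner_Integration.integral_add Bochner_Integration.integrable_add)
  also have "\<dots> = rhocf m \<tau>"
    unfolding q_right q_left rhocf_def by simp
  finally show ?thesis .
qed


lemma Phi_chain[derivative_intros]:
  "(f has_real_derivative D) (at x within S) \<Longrightarrow> ((\<lambda>x. Phi (f x)) has_real_derivative std_normal_density (f x) * D) (at x within S)"
  using DERIV_chain2[OF Phi_deriv] by blast

lemma phi_chain[derivative_intros]:
  "(f has_real_derivative D) (at x within S) \<Longrightarrow> ((\<lambda>x. std_normal_density (f x)) has_real_derivative (- f x * std_normal_density (f x)) * D) (at x within S)"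
  using DERIV_chain2[OF phi_deriv] by blast

lemma Phi_cont: "continuous_on UNIV Phi"
  using Phi_deriv by (meson DERIV_isCont continuous_at_imp_continuous_on)

lemma Phi_meas[measurable]: "Phi \<in> borel_measurable borel"
  by (rule borel_measurable_continuous_onI[OF Phi_cont])

lemma Phi_isCont[continuous_intros]: "isCont f x \<Longrightarrow> isCont (\<lambda>x. Phi (f x)) x"
  by (rule isCont_o2[OF _ DERIV_isCont[OF Phi_deriv]])

lemma Phi_nonneg: "Phi u \<ge> 0"
  unfolding Phi_def Lam_def by (rule integral_nonneg_AE) auto

lemma Phi_le1: "Phi u \<le> 1"
proof -
  have "Phi u \<le> (\<integral>x. std_normal_density x \<partial>lborel)"
    unfolding Phi_def Lam_def
  proof (rule integral_mono)
    show "integrable lborel (\<lambda>x. indicator {..u} x * std_normal_density x)"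
      using integrable_mult_indicator[OF _ int0, of "{..u}"] by simp
  qed (auto split: split_indicator)
  then show ?thesis by simp
qed

lemma phi_le1: "std_normal_density u \<le> 1"
proof -
  have "exp (- u\<^sup>2 / 2) \<le> 1" by simp
  moreover have "1 \<le> sqrt (2 * pi)" using pi_gt3 by simp
  then have "1 / sqrt (2 * pi) \<le> 1" by simp
  ultimately have "(1 / sqrt (2 * pi)) * exp (- u\<^sup>2 / 2) \<le> 1 * 1"
    by (intro mult_mono) auto
  then show ?thesis unfolding std_normal_density_def by simp
qed

definition gfun :: "real \<Rightarrow> real \<Rightarrow> real" where
  "gfun m s = s * (1 - Phi (s - m) + Phi (- s - m)) - std_normal_density (s - m) - std_normal_density (- s - m)"

lemma rhocf_deriv: "((\<lambda>t. rhocf m t) has_real_derivative 2 * gfun m s) (at s)"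
  unfolding rhocf_def
  by (rule derivative_eq_intros refl | simp)+ (simp add: gfun_def algebra_simps power2_eq_square)

lemma gfun_deriv: "((\<lambda>m. gfun m s) has_real_derivative m * (std_normal_density (s - m) + std_normal_density (- s - m))) (at m)"
  unfolding gfun_def
  by (rule derivative_eq_intros refl | simp)+ (simp add: algebra_simps)

lemma gfun_bound: "\<bar>gfun m s\<bar> \<le> 2 * \<bar>s\<bar> + 2"
proof -
  have a: "\<bar>1 - Phi (s - m) + Phi (- s - m)\<bar> \<le> 2"
    using Phi_nonneg[of "s - m"] Phi_le1[of "s - m"] Phi_nonneg[of "-s - m"] Phi_le1[of "-s - m"] by linarith
  have "\<bar>s * (1 - Phi (s - m) + Phi (- s - m))\<bar> \<le> \<bar>s\<bar> * 2"
    unfolding abs_mult by (rule mult_left_mono[OF a]) simp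
  then show ?thesis unfolding gfun_def
    using phi_le1[of "s - m"] phi_le1[of "-s-m"] normal_density_nonneg[of 0 1 "s - m"] normal_density_nonneg[of 0 1 "-s-m"]
    by linarith
qed


lemma phi_mono: assumes "0 \<le> a" "a \<le> b" shows "std_normal_density b \<le> std_normal_density a"
proof -
  have "a\<^sup>2 \<le> b\<^sup>2" by (rule power_mono) (use assms in auto)
  then have "exp (- (b\<^sup>2 / 2)) \<le> exp (- (a\<^sup>2 / 2))" by simp
  then show ?thesis unfolding std_normal_density_def by (simp add: divide_right_mono)
qed

lemma gfun_mvt: "a < b \<Longrightarrow> \<exists>z. a < z \<and> z < b \<and> gfun b s - gfun a s = (b - a) * (z * (std_normal_density (s - z) + std_normal_density (- s - z)))"
  by (rule MVT2, assumption, rule gfun_deriv)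

lemma phi_even: "std_normal_density (- a) = std_normal_density a"
  unfolding std_normal_density_def by simp

lemma phi_pos: "0 < std_normal_density a"
  by (rule normal_density_pos) simp

lemma gfun_mono_pos:
  assumes "0 \<le> m" "m \<le> m'" shows "gfun m s \<le> gfun m' s"
proof (cases "m = m'")
  case False
  then have "m < m'" using assms by simp
  from gfun_mvt[OF this, of s] obtain z where
    z: "m < z" "gfun m' s - gfun m s = (m' - m) * (z * (std_normal_density (s - z) + std_normal_density (- s - z)))"
    by blast
  have "0 \<le> (m' - m) * (z * (std_normal_density (s - z) + std_normal_density (- s - z)))"
    using z(1) assms by (intro mult_nonneg_nonneg add_nonneg_nonneg) auto
  then show ?thesis using z by simp
qed simp

lemma gfun_mono_neg:
  assumes "m \<le> 0" "m' \<le> m" shows "gfun m s \<le> gfun m' s"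
proof (cases "m = m'")
  case False
  then have "m' < m" using assms by simp
  from gfun_mvt[OF this, of s] obtain z where
    z: "z < m" "gfun m s - gfun m' s = (m - m') * (z * (std_normal_density (s - z) + std_normal_density (- s - z)))"
    by blast
  have "(m - m') * (z * (std_normal_density (s - z) + std_normal_density (- s - z))) \<le> 0"
    using z(1) assms \<open>m' < m\<close> by (intro mult_nonneg_nonpos mult_nonpos_nonneg add_nonneg_nonneg) auto
  then show ?thesis using z by simp
qed simp

lemma gfun_ge0: "gfun 0 s \<le> gfun m s"
  by (cases "m \<ge> 0") (auto intro: gfun_mono_pos gfun_mono_neg)

lemma gfun_step_pos:
  assumes "0 < \<delta>" "\<delta> \<le> s"
  shows "gfun (\<delta>/2) s + \<delta>\<^sup>2 / 4 * std_normal_density (s - \<delta>/2) \<le> gfun \<delta> s"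
proof -
  have "\<delta>/2 < \<delta>" using assms by simp
  from gfun_mvt[OF this, of s] obtain z where
    z: "\<delta>/2 < z" "z < \<delta>" "gfun \<delta> s - gfun (\<delta>/2) s = (\<delta> - \<delta>/2) * (z * (std_normal_density (s - z) + std_normal_density (- s - z)))"
    by blast
  have p: "std_normal_density (s - \<delta>/2) \<le> std_normal_density (s - z)"
    by (rule phi_mono) (use z assms in auto)
  have "\<delta>/2 * std_normal_density (s - \<delta>/2) \<le> z * (std_normal_density (s - z) + std_normal_density (- s - z))"
  proof -
    have "\<delta>/2 * std_normal_density (s - \<delta>/2) \<le> z * std_normal_density (s - z)"
      by (rule mult_mono) (use z assms p in auto)
    also have "\<dots> \<le> z * (std_normal_density (s - z) + std_normal_density (- s - z))"
      using z assms by (intro mult_left_mono) auto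
    finally show ?thesis .
  qed
  then have "\<delta>/2 * (\<delta>/2 * std_normal_density (s - \<delta>/2)) \<le> \<delta>/2 * (z * (std_normal_density (s - z) + std_normal_density (- s - z)))"
    using assms by (intro mult_left_mono) auto
  then show ?thesis using z by (simp add: power2_eq_square field_simps)
qed

lemma gfun_step_neg:
  assumes "0 < \<delta>" "\<delta> \<le> s"
  shows "gfun (-\<delta>/2) s + \<delta>\<^sup>2 / 4 * std_normal_density (s - \<delta>/2) \<le> gfun (-\<delta>) s"
proof -
  have "-\<delta> < -\<delta>/2" using assms by simp
  from gfun_mvt[OF this, of s] obtain z where
    z: "-\<delta> < z" "z < -\<delta>/2" "gfun (-\<delta>/2) s - gfun (-\<delta>) s = (-\<delta>/2 - -\<delta>) * (z * (std_normal_density (s - z) + std_normal_density (- s - z)))"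
    by blast
  have p: "std_normal_density (s - \<delta>/2) \<le> std_normal_density (- s - z)"
    using phi_mono[of "s + z" "s - \<delta>/2"] z assms phi_even[of "s + z"] by (simp add: algebra_simps)
  have "\<delta>/2 * std_normal_density (s - \<delta>/2) \<le> (-z) * (std_normal_density (s - z) + std_normal_density (- s - z))"
  proof -
    have "\<delta>/2 * std_normal_density (s - \<delta>/2) \<le> (-z) * std_normal_density (- s - z)"
      by (rule mult_mono) (use z assms p in auto)
    also have "\<dots> \<le> (-z) * (std_normal_density (s - z) + std_normal_density (- s - z))"
      using z assms by (intro mult_left_mono) auto
    finally show ?thesis .
  qed
  then have "\<delta>/2 * (\<delta>/2 * std_normal_density (s - \<delta>/2)) \<le> \<delta>/2 * ((-z) * (std_normal_density (s - z) + std_normal_density (- s - z)))"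
    using assms by (intro mult_left_mono) auto
  then show ?thesis using z by (simp add: power2_eq_square field_simps)
qed

lemma gfun_lower:
  assumes "0 < \<delta>" "\<delta> \<le> s"
  shows "gfun 0 s + \<delta>\<^sup>2 / 4 * std_normal_density (s - \<delta>/2) * indicator {m. \<delta> \<le> \<bar>m\<bar>} m \<le> gfun m s"
proof (cases "\<delta> \<le> \<bar>m\<bar>")
  case True
  show ?thesis
  proof (cases "m \<ge> 0")
    case True
    have "gfun 0 s \<le> gfun (\<delta>/2) s" using assms by (intro gfun_mono_pos) auto
    moreover have "gfun \<delta> s \<le> gfun m s" using assms True \<open>\<delta> \<le> \<bar>m\<bar>\<close> by (intro gfun_mono_pos) auto
    ultimately show ?thesis using gfun_step_pos[OF assms] \<open>\<delta> \<le> \<bar>m\<bar>\<close> by simp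
  next
    case False
    have "gfun 0 s \<le> gfun (-\<delta>/2) s" using assms by (intro gfun_mono_neg) auto
    moreover have "gfun (-\<delta>) s \<le> gfun m s" using assms False \<open>\<delta> \<le> \<bar>m\<bar>\<close> by (intro gfun_mono_neg) auto
    ultimately show ?thesis using gfun_step_neg[OF assms] \<open>\<delta> \<le> \<bar>m\<bar>\<close> by simp
  qed
qed (use gfun_ge0 in simp)

lemma gfun0_lower: "0 \<le> s \<Longrightarrow> - 2 * std_normal_density s \<le> gfun 0 s"
  unfolding gfun_def using Phi_nonneg[of "-s"] Phi_le1[of s] phi_even[of s]
  by (simp add: mult_nonneg_nonneg)


lemma mvt_bound:
  fixes f f' :: "real \<Rightarrow> real"
  assumes D: "\<And>s. a < s \<Longrightarrow> s < b \<Longrightarrow> (f has_real_derivative f' s) (at s)"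
    and B: "\<And>s. a < s \<Longrightarrow> s < b \<Longrightarrow> \<bar>f' s\<bar> \<le> C"
    and u: "a < u" "u < b" and x: "a < x" "x < b"
  shows "\<bar>f u - f x\<bar> \<le> C * \<bar>u - x\<bar>"
proof (cases u x rule: linorder_cases)
  case less
  obtain z where z: "u < z" "z < x" "f x - f u = (x - u) * f' z"
    using MVT2[OF less, of f f'] D u x by force
  have "\<bar>f u - f x\<bar> = \<bar>x - u\<bar> * \<bar>f' z\<bar>" using z by (metis abs_minus_commute abs_mult)
  also have "\<dots> \<le> \<bar>x - u\<bar> * C" by (rule mult_left_mono) (use B z u x in auto)
  finally show ?thesis by (simp add: abs_minus_commute mult.commute)
next
  case greater
  obtain z where z: "x < z" "z < u" "f u - f x = (u - x) * f' z"
    using MVT2[OF greater, of f f'] D u x by force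
  have "\<bar>f u - f x\<bar> = \<bar>u - x\<bar> * \<bar>f' z\<bar>" using z by (simp add: abs_mult)
  also have "\<dots> \<le> \<bar>u - x\<bar> * C" by (rule mult_left_mono) (use B z u x in auto)
  finally show ?thesis by (simp add: mult.commute)
qed simp

lemma deriv_int:
  fixes F F' :: "'a \<Rightarrow> real \<Rightarrow> real"
  assumes M: "finite_measure M"
    and ab: "a < x" "x < b"
    and Fm: "\<And>s. (\<lambda>m. F m s) \<in> borel_measurable M"
    and F'm: "(\<lambda>m. F' m x) \<in> borel_measurable M"
    and Fint: "\<And>s. a < s \<Longrightarrow> s < b \<Longrightarrow> integrable M (\<lambda>m. F m s)"
    and D: "\<And>m s. m \<in> space M \<Longrightarrow> a < s \<Longrightarrow> s < b \<Longrightarrow> ((\<lambda>t. F m t) has_real_derivative F' m s) (at s)"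
    and B: "\<And>m s. m \<in> space M \<Longrightarrow> a < s \<Longrightarrow> s < b \<Longrightarrow> \<bar>F' m s\<bar> \<le> C"
  shows "((\<lambda>s. \<integral>m. F m s \<partial>M) has_real_derivative (\<integral>m. F' m x \<partial>M)) (at x)"
  unfolding has_field_derivative_iff tendsto_at_iff_sequentially
proof (intro allI impI)
  fix X :: "nat \<Rightarrow> real"
  assume X: "\<forall>i. X i \<in> UNIV - {x}" and Xx: "X \<longlonglongrightarrow> x"
  have "eventually (\<lambda>i. X i \<in> {a<..<b}) sequentially"
    using Xx ab by (intro topological_tendstoD) auto
  then obtain N where N: "\<And>n. n \<ge> N \<Longrightarrow> X n \<in> {a<..<b}"
    by (auto simp: eventually_sequentially)
  define Y where "Y n = X (n + N)" for n
  have Y: "a < Y n" "Y n < b" "Y n \<noteq> x" for n using N[of "n + N"] X by (auto simp: Y_def)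
  have Yx: "Y \<longlonglongrightarrow> x" unfolding Y_def using LIMSEQ_ignore_initial_segment[OF Xx] .
  have eq: "(\<integral>m. F m (Y n) \<partial>M) - (\<integral>m. F m x \<partial>M) = (\<integral>m. F m (Y n) - F m x \<partial>M)" for n
    using Fint[OF Y(1,2)] Fint[OF ab] by simp
  have "(\<lambda>n. \<integral>m. (F m (Y n) - F m x) / (Y n - x) \<partial>M) \<longlonglongrightarrow> (\<integral>m. F' m x \<partial>M)"
  proof (rule integral_dominated_convergence[where w="\<lambda>_. C"])
    show "(\<lambda>m. F' m x) \<in> borel_measurable M" by fact
    show "(\<lambda>m. (F m (Y n) - F m x) / (Y n - x)) \<in> borel_measurable M" for n
      using Fm by measurable
    show "integrable M (\<lambda>_. C)" using M by (simp add: finite_measure.integrable_const)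
    show "AE m in M. (\<lambda>n. (F m (Y n) - F m x) / (Y n - x)) \<longlonglongrightarrow> F' m x"
    proof (rule AE_I2)
      fix m assume m: "m \<in> space M"
      have "((\<lambda>t. (F m t - F m x) / (t - x)) \<longlongrightarrow> F' m x) (at x)"
        using D[OF m ab] by (simp add: has_field_derivative_iff)
      then show "(\<lambda>n. (F m (Y n) - F m x) / (Y n - x)) \<longlonglongrightarrow> F' m x"
        unfolding tendsto_at_iff_sequentially using Y Yx by (auto simp: comp_def)
    qed
    show "AE m in M. norm ((F m (Y n) - F m x) / (Y n - x)) \<le> C" for n
    proof (rule AE_I2)
      fix m assume m: "m \<in> space M"
      have "\<bar>F m (Y n) - F m x\<bar> \<le> C * \<bar>Y n - x\<bar>"
        by (rule mvt_bound[where a=a and b=b and f'="F' m"]) (use D[OF m] B[OF m] Y ab in auto)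
      then show "norm ((F m (Y n) - F m x) / (Y n - x)) \<le> C"
        using Y(3)[of n] by (simp add: abs_divide divide_le_eq)
    qed
  qed
  moreover have "(\<lambda>n. \<integral>m. (F m (Y n) - F m x) / (Y n - x) \<partial>M) = (\<lambda>n. ((\<integral>m. F m (Y n) \<partial>M) - (\<integral>m. F m x \<partial>M)) / (Y n - x))"
    by (rule ext) (simp only: eq integral_divide_zero)
  ultimately have "(\<lambda>n. ((\<integral>m. F m (Y n) \<partial>M) - (\<integral>m. F m x \<partial>M)) / (Y n - x)) \<longlonglongrightarrow> (\<integral>m. F' m x \<partial>M)"
    by simp
  then show "((\<lambda>y. ((\<integral>m. F m y \<partial>M) - (\<integral>m. F m x \<partial>M)) / (y - x)) \<circ> X) \<longlonglongrightarrow> (\<integral>m. F' m x \<partial>M)"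
    unfolding Y_def comp_def by (rule LIMSEQ_offset)
qed


lemma soft_meas_raw[measurable (raw)]:
  "f \<in> borel_measurable M \<Longrightarrow> (\<lambda>x. soft_thresh (f x) \<tau>) \<in> borel_measurable M"
  using measurable_compose[OF _ soft_meas] by blast

lemma soft_dist: "\<bar>soft_thresh a t - a\<bar> \<le> \<bar>t\<bar>"
  unfolding soft_thresh_def by (auto simp: sgn_if max_def abs_if)

lemma h_bound: "(soft_thresh (m + z) t - m)\<^sup>2 \<le> 2 * t\<^sup>2 + 2 * z\<^sup>2"
proof -
  have "\<bar>soft_thresh (m + z) t - m\<bar> \<le> \<bar>t\<bar> + \<bar>z\<bar>"
    using soft_dist[of "m + z" t] by linarith
  then have "(soft_thresh (m + z) t - m)\<^sup>2 \<le> (\<bar>t\<bar> + \<bar>z\<bar>)\<^sup>2"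
    by (metis abs_ge_zero abs_le_square_iff abs_of_nonneg add_nonneg_nonneg)
  also have "\<dots> \<le> 2 * t\<^sup>2 + 2 * z\<^sup>2"
  proof -
    have a: "(\<bar>t\<bar> + \<bar>z\<bar>)\<^sup>2 = t\<^sup>2 + z\<^sup>2 + 2 * \<bar>t\<bar> * \<bar>z\<bar>"
      by (simp add: power2_sum)
    have b: "(\<bar>t\<bar> - \<bar>z\<bar>)\<^sup>2 = t\<^sup>2 + z\<^sup>2 - 2 * \<bar>t\<bar> * \<bar>z\<bar>"
      by (simp add: power2_diff)
    have "0 \<le> (\<bar>t\<bar> - \<bar>z\<bar>)\<^sup>2" by simp
    then show ?thesis using a b by linarith
  qed
  finally show ?thesis .
qed

lemma phi_shift: "std_normal_density (t - d/2) = std_normal_density t * exp (t * d / 2 - d\<^sup>2 / 8)"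
proof -
  have e: "- (t - d/2)\<^sup>2 / 2 = - t\<^sup>2 / 2 + (t * d / 2 - d\<^sup>2 / 8)"
    by (simp add: power2_eq_square field_simps)
  show ?thesis unfolding std_normal_density_def e exp_add by simp
qed

theorem proposition2:
  fixes G :: "real measure"
  assumes "prob_space G"
    and "sets G = sets borel"
    and "integrable G (\<lambda>x. x\<^sup>2)"
    and "measure G {x. x \<noteq> 0} \<noteq> 0"
  shows "\<exists>\<tau>0 \<ge> 0. \<forall>\<tau>. \<tau> > \<tau>0 \<longrightarrow>
           (\<exists>D. ((\<lambda>t. risk t G) has_real_derivative D) (at \<tau>) \<and> D > 0)"
proof -
  interpret G: prob_space G by fact
  interpret N: prob_space std_normal unfolding std_normal_def by (rule prob_space_normal_density, simp)
  interpret P: pair_prob_space G std_normal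
    by (simp add: pair_prob_space_def pair_sigma_finite_def G.sigma_finite_measure_axioms
        N.sigma_finite_measure_axioms G.prob_space_axioms N.prob_space_axioms)
  have setsG[measurable_cong]: "sets G = sets borel" by fact
  have setsN[measurable_cong]: "sets std_normal = sets borel" unfolding std_normal_def by simp
  have spaceG: "space G = UNIV" using sets_eq_imp_space_eq[OF setsG] by simp

  have intz2: "integrable std_normal (\<lambda>z. z\<^sup>2)"
    unfolding std_normal_def using int2 by (subst integrable_density) auto
  have intz2': "(\<integral>z. z\<^sup>2 \<partial>std_normal) = 1"
    unfolding std_normal_def using integral_std_normal_moment_even[of 1]
    by (subst integral_density) (auto simp: numeral_eq_Suc)
  have hint: "integrable (G \<Otimes>\<^sub>M std_normal) (\<lambda>p. (soft_thresh (fst p + snd p) t - fst p)\<^sup>2)" for t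
  proof (rule Bochner_Integration.integrable_bound)
    show "integrable (G \<Otimes>\<^sub>M std_normal) (\<lambda>p. 2 * t\<^sup>2 + 2 * (snd p)\<^sup>2)"
    proof (rule P.Fubini_integrable)
      show "(\<lambda>p. 2 * t\<^sup>2 + 2 * (snd p)\<^sup>2) \<in> borel_measurable (G \<Otimes>\<^sub>M std_normal)" by measurable
      have "integrable G (\<lambda>x. \<integral>y. 2 * t\<^sup>2 + 2 * y\<^sup>2 \<partial>std_normal)" by simp
      then show "integrable G (\<lambda>x. \<integral>y. norm (2 * t\<^sup>2 + 2 * (snd (x, y))\<^sup>2) \<partial>std_normal)" by simp
      show "AE x in G. integrable std_normal (\<lambda>y. 2 * t\<^sup>2 + 2 * (snd (x, y))\<^sup>2)"
        using intz2 by simp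
    qed
    show "(\<lambda>p. (soft_thresh (fst p + snd p) t - fst p)\<^sup>2) \<in> borel_measurable (G \<Otimes>\<^sub>M std_normal)"
      by measurable
    show "AE p in G \<Otimes>\<^sub>M std_normal. norm ((soft_thresh (fst p + snd p) t - fst p)\<^sup>2) \<le> norm (2 * t\<^sup>2 + 2 * (snd p)\<^sup>2)"
      using h_bound by simp
  qed
  have risk_rho: "risk t G = (\<integral>m. rho m t \<partial>G)" for t
    unfolding risk_def rho_def using P.integral_fst'[OF hint[of t]] by simp
  have rho_int: "integrable G (\<lambda>m. rho m t)" for t
    unfolding rho_def using P.integrable_fst'[OF hint[of t]] by simp

  obtain \<delta> where \<delta>: "\<delta> > 0" "measure G {m. \<delta> \<le> \<bar>m\<bar>} > 0"
  proof -
    have "\<exists>n::nat. measure G {m. 1 / Suc n \<le> \<bar>m\<bar>} \<noteq> 0"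
    proof (rule ccontr)
      assume "\<not> ?thesis"
      then have "\<And>n::nat. {m. 1 / Suc n \<le> \<bar>m\<bar>} \<in> null_sets G"
        by (auto simp: G.emeasure_eq_measure null_sets_def setsG)
      then have "(\<Union>n::nat. {m. 1 / Suc n \<le> \<bar>m\<bar>}) \<in> null_sets G" by blast
      moreover have "(\<Union>n::nat. {m. 1 / Suc n \<le> \<bar>m\<bar>}) = {x. x \<noteq> 0}"
      proof (intro set_eqI iffI)
        fix x :: real assume "x \<in> {x. x \<noteq> 0}"
        then have "\<bar>x\<bar> > 0" by simp
        then obtain n where "inverse (real (Suc n)) < \<bar>x\<bar>" using reals_Archimedean by blast
        then have "1 / real (Suc n) \<le> \<bar>x\<bar>" by (simp add: inverse_eq_divide)
        then show "x \<in> (\<Union>n::nat. {m. 1 / Suc n \<le> \<bar>m\<bar>})" by auto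
      qed auto
      ultimately show False using assms(4) by (simp add: G.emeasure_eq_measure null_sets_def)
    qed
    then obtain n :: nat where "measure G {m. 1 / Suc n \<le> \<bar>m\<bar>} \<noteq> 0" by blast
    then show ?thesis using that[of "1 / Suc n"] by (simp add: order_less_le)
  qed
  define p where "p = measure G {m. \<delta> \<le> \<bar>m\<bar>}"
  have p: "p > 0" using \<delta> p_def by simp
  define \<tau>0 where "\<tau>0 = max \<delta> (2 / \<delta> * (ln (8 / (\<delta>\<^sup>2 * p)) + \<delta>\<^sup>2 / 8))"
  show ?thesis
  proof (rule exI[of _ \<tau>0], intro conjI allI impI)
    show "0 \<le> \<tau>0" unfolding \<tau>0_def using \<delta> by simp
    fix \<tau> assume "\<tau>0 < \<tau>"
    then have \<tau>\<delta>: "\<delta> < \<tau>" and \<tau>big: "2 / \<delta> * (ln (8 / (\<delta>\<^sup>2 * p)) + \<delta>\<^sup>2 / 8) < \<tau>"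
      unfolding \<tau>0_def by auto
    have \<tau>pos: "\<tau> > 0" using \<tau>\<delta> \<delta> by simp
    have der: "((\<lambda>s. \<integral>m. rhocf m s \<partial>G) has_real_derivative (\<integral>m. 2 * gfun m \<tau> \<partial>G)) (at \<tau>)"
    proof (rule deriv_int[where a="\<tau>/2" and b="2*\<tau>" and C="4 * (2 * \<tau>) + 4"])
      show "finite_measure G" by (rule G.finite_measure_axioms)
      show "\<tau> / 2 < \<tau>" "\<tau> < 2 * \<tau>" using \<tau>pos by auto
      show "(\<lambda>m. rhocf m s) \<in> borel_measurable G" for s unfolding rhocf_def by measurable
      show "(\<lambda>m. 2 * gfun m \<tau>) \<in> borel_measurable G" unfolding gfun_def by measurable
      show "integrable G (\<lambda>m. rhocf m s)" if "\<tau> / 2 < s" "s < 2 * \<tau>" for s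
        using rho_int[of s] rho_eq[of s] that \<tau>pos by simp
      show "((\<lambda>t. rhocf m t) has_real_derivative 2 * gfun m s) (at s)" for m s
        by (rule rhocf_deriv)
      show "\<bar>2 * gfun m s\<bar> \<le> 4 * (2 * \<tau>) + 4" if "\<tau> / 2 < s" "s < 2 * \<tau>" for m s
        using gfun_bound[of m s] that \<tau>pos by simp
    qed
    have der2: "((\<lambda>t. risk t G) has_real_derivative (\<integral>m. 2 * gfun m \<tau> \<partial>G)) (at \<tau>)"
    proof (rule has_field_derivative_transform_within_open[OF der, where S="{0<..}"])
      show "(\<integral>m. rhocf m s \<partial>G) = risk s G" if "s \<in> {0<..}" for s
        using that by (simp add: risk_rho rho_eq)
    qed (use \<tau>pos in auto)
    define c where "c = \<delta>\<^sup>2 / 4 * std_normal_density (\<tau> - \<delta>/2)"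
    have gint: "integrable G (\<lambda>m. gfun m \<tau>)"
    proof (rule Bochner_Integration.integrable_bound)
      show "integrable G (\<lambda>m. 2 * \<bar>\<tau>\<bar> + 2)" by simp
      show "(\<lambda>m. gfun m \<tau>) \<in> borel_measurable G" unfolding gfun_def by measurable
      show "AE m in G. norm (gfun m \<tau>) \<le> norm (2 * \<bar>\<tau>\<bar> + 2)"
        using gfun_bound by simp
    qed
    have Aset: "{m. \<delta> \<le> \<bar>m\<bar>} \<in> sets G" unfolding setsG by measurable
    have lint: "integrable G (\<lambda>m. gfun 0 \<tau> + c * indicator {m. \<delta> \<le> \<bar>m\<bar>} m)"
      using Aset by (intro Bochner_Integration.integrable_add integrable_mult_right integrable_real_indicator) (auto simp: G.emeasure_eq_measure)
    have "(\<integral>m. gfun 0 \<tau> + c * indicator {m. \<delta> \<le> \<bar>m\<bar>} m \<partial>G) \<le> (\<integral>m. gfun m \<tau> \<partial>G)"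
    proof (rule integral_mono[OF lint gint])
      fix m show "gfun 0 \<tau> + c * indicator {m. \<delta> \<le> \<bar>m\<bar>} m \<le> gfun m \<tau>"
        using gfun_lower[OF \<delta>(1) less_imp_le[OF \<tau>\<delta>], of m] unfolding c_def by simp
    qed
    moreover have "(\<integral>m. gfun 0 \<tau> + c * indicator {m. \<delta> \<le> \<bar>m\<bar>} m \<partial>G) = gfun 0 \<tau> + c * p"
    proof -
      have "(\<integral>m. gfun 0 \<tau> + c * indicator {m. \<delta> \<le> \<bar>m\<bar>} m \<partial>G) = (\<integral>m. gfun 0 \<tau> \<partial>G) + (\<integral>m. c * indicator {m. \<delta> \<le> \<bar>m\<bar>} m \<partial>G)"
        using Aset by (intro Bochner_Integration.integral_add integrable_mult_right integrable_real_indicator) (auto simp: G.emeasure_eq_measure)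
      also have "\<dots> = gfun 0 \<tau> + c * p"
        unfolding integral_mult_right_zero using G.prob_space spaceG by (simp add: p_def)
      finally show ?thesis .
    qed
    ultimately have low: "gfun 0 \<tau> + c * p \<le> (\<integral>m. gfun m \<tau> \<partial>G)" by simp
    have "ln (8 / (\<delta>\<^sup>2 * p)) < \<tau> * \<delta> / 2 - \<delta>\<^sup>2 / 8"
      using \<tau>big \<delta> by (simp add: field_simps)
    then have E: "8 / (\<delta>\<^sup>2 * p) < exp (\<tau> * \<delta> / 2 - \<delta>\<^sup>2 / 8)"
      using \<delta> p by (metis exp_less_cancel_iff exp_ln divide_pos_pos zero_less_mult_iff zero_less_numeral zero_less_power)
    have "2 * std_normal_density \<tau> < c * p"
    proof -
      have "8 < exp (\<tau> * \<delta> / 2 - \<delta>\<^sup>2 / 8) * (\<delta>\<^sup>2 * p)"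
        using E \<delta> p by (simp add: field_simps)
      then have "2 * std_normal_density \<tau> * 4 < std_normal_density \<tau> * (exp (\<tau> * \<delta> / 2 - \<delta>\<^sup>2 / 8) * (\<delta>\<^sup>2 * p))"
        using phi_pos[of \<tau>] by simp
      then show ?thesis unfolding c_def phi_shift by (simp add: field_simps)
    qed
    then have "0 < (\<integral>m. gfun m \<tau> \<partial>G)"
      using low gfun0_lower[of \<tau>] \<tau>pos by simp
    then have "0 < (\<integral>m. 2 * gfun m \<tau> \<partial>G)" by simp
    with der2 show "\<exists>D. ((\<lambda>t. risk t G) has_real_derivative D) (at \<tau>) \<and> D > 0" by blast
  qed
qed

end
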